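(* Let $\omega\colon\mathbf Z_+\to(0,+\infty)$ be a positive weight and let $T\colon\mathbf Z_+\to\mathbf Z_+$ be the modified Collatz map ($T(n)=n/2$ if $n$ is even, $T(n)=(3n+1)/2$ if $n$ is odd). Let $\mathcal X_\omega$ be the Hilbert space of holomorphic functions $f(z)=\sum_{n\ge 3}c_nz^n$ on the unit disk with $\|f\|_\omega^2=\sum_{n\ge3}|c_n|^2/\omega(n)<\infty$, and let $\mathcal T$ be defined on $\mathcal X_\omega$ by \[\mathcal T\sum_{n\ge3}c_nz^n=\sum_{j\ge 3,\ T(j)\ge 3}c_jz^{T(j)}\] (so the coefficient of $z^k$, $k\ge3$, in $\mathcal Tf$ is $\sum_{j\ge3,\,T(j)=k}c_j$). Then $\mathcal T$ is a bounded operator on $\mathcal X_\omega$ if and only if the three sequences $(\omega(6m)/\omega(3m))_{m\ge1}$, $(\omega(6m+2)/\omega(3m+1))_{m\ge1}$ and $((\omega(6m+4)+\omega(2m+1))/\omega(3m+2))_{m\ge1}$ are bounded. In this case \[\|\mathcal T\|_\omega^2=\max\Big\{\sup_{m\ge1}\tfrac{\omega(6m)}{\omega(3m)},\ \sup_{m\ge1}\tfrac{\omega(6m+2)}{\omega(3m+1)},\ \sup_{m\ge1}\tfrac{\omega(6m+4)+\omega(2m+1)}{\omega(3m+2)}\Big\},\] and moreover for every $n\ge0$, \[\|\mathcal T^n\|_\omega^2=\sup_{k\ge3}\sum_{j\ge3,\ T^n(j)=k}\frac{\omega(j)}{\omega(k)}.\] In particular, for $\omega=\omega_0$ with $\omega_0(n)=(n+1)/\pi$,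 $\mathcal T$ is bounded on $\mathcal X_{\omega_0}$ and $\|\mathcal T\|^2=8/3$.
   Context: $\mathcal X_\omega$ is the quotient of the weighted Bergman space $\mathcal B^2_\omega=\{\sum_{n\ge0}c_nz^n:\sum|c_n|^2/\omega(n)<\infty\}$ by $\mathrm{span}[1,z,z^2]$, identified with functions $\sum_{n\ge3}c_nz^n$; its inner product is $\langle f,g\rangle=\sum_{n\ge3}c_n(f)\overline{c_n(g)}/\omega(n)$. For $\omega_0(n)=(n+1)/\pi$, $\mathcal B^2_{\omega_0}$ is the classical Bergman space. *)

theory Defs
  imports "HOL-Analysis.Analysis"
begin

definition collatzT :: "nat \<Rightarrow> nat" where
  "collatzT n = (if even n then n div 2 else (3 * n + 1) div 2)"

text \<open>Elements of X_omega, represented by their Taylor coefficient sequences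
  (coefficients of index < 3 vanish).\<close>
definition in_X :: "(nat \<Rightarrow> real) \<Rightarrow> (nat \<Rightarrow> complex) \<Rightarrow> bool" where
  "in_X \<omega> c \<longleftrightarrow> (\<forall>n<3. c n = 0) \<and> summable (\<lambda>n. (cmod (c n))\<^sup>2 / \<omega> n)"

definition wnorm :: "(nat \<Rightarrow> real) \<Rightarrow> (nat \<Rightarrow> complex) \<Rightarrow> real" where
  "wnorm \<omega> c = sqrt (\<Sum>n. (cmod (c n))\<^sup>2 / \<omega> n)"

definition Top :: "(nat \<Rightarrow> complex) \<Rightarrow> (nat \<Rightarrow> complex)" where
  "Top c = (\<lambda>k. if k < 3 then 0 else (\<Sum>j\<in>{j. 3 \<le> j \<and> collatzT j = k}. c j))"

definition bounded_on_X :: "(nat \<Rightarrow> real) \<Rightarrow> ((nat \<Rightarrow> complex) \<Rightarrow> (nat \<Rightarrow> complex)) \<Rightarrow> bool" where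
  "bounded_on_X \<omega> A \<longleftrightarrow>
     (\<forall>c. in_X \<omega> c \<longrightarrow> in_X \<omega> (A c)) \<and>
     (\<exists>C. \<forall>c. in_X \<omega> c \<longrightarrow> wnorm \<omega> (A c) \<le> C * wnorm \<omega> c)"

definition opnorm_X :: "(nat \<Rightarrow> real) \<Rightarrow> ((nat \<Rightarrow> complex) \<Rightarrow> (nat \<Rightarrow> complex)) \<Rightarrow> real" where
  "opnorm_X \<omega> A = Sup ((\<lambda>c. wnorm \<omega> (A c)) ` {c. in_X \<omega> c \<and> wnorm \<omega> c \<le> 1})"

definition omega0 :: "nat \<Rightarrow> real" where
  "omega0 n = (real n + 1) / pi"

end

theory Submission
  imports Defs
begin


definition Aop :: "(nat \<Rightarrow> nat set) \<Rightarrow> (nat \<Rightarrow> complex) \<Rightarrow> (nat \<Rightarrow> complex)" where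
  "Aop P c = (\<lambda>k. if k < 3 then 0 else (\<Sum>j\<in>P k. c j))"

definition Sfun :: "(nat \<Rightarrow> real) \<Rightarrow> (nat \<Rightarrow> nat set) \<Rightarrow> nat \<Rightarrow> real" where
  "Sfun \<omega> P k = (\<Sum>j\<in>P k. \<omega> j / \<omega> k)"

lemma term_nonneg: "\<forall>n. \<omega> n > 0 \<Longrightarrow> 0 \<le> (cmod (c n))\<^sup>2 / (\<omega> n::real)"
  by (metis divide_nonneg_pos zero_le_power2)

lemma wnorm_sq:
  assumes "in_X \<omega> c" "\<forall>n. \<omega> n > 0"
  shows "(wnorm \<omega> c)\<^sup>2 = (\<Sum>n. (cmod (c n))\<^sup>2 / \<omega> n)"
proof -
  have "0 \<le> (\<Sum>n. (cmod (c n))\<^sup>2 / \<omega> n)"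
    apply (rule suminf_nonneg)
    using assms by (auto simp: in_X_def term_nonneg)
  then show ?thesis by (simp add: wnorm_def)
qed

lemma wnorm_nonneg:
  assumes "in_X \<omega> c" "\<forall>n. \<omega> n > 0"
  shows "wnorm \<omega> c \<ge> 0"
proof -
  have "0 \<le> (\<Sum>n. (cmod (c n))\<^sup>2 / \<omega> n)"
    apply (rule suminf_nonneg)
    using assms by (auto simp: in_X_def term_nonneg)
  then show ?thesis by (simp add: wnorm_def)
qed

lemma test_vector:
  assumes pos: "\<forall>n. \<omega> n > 0" and fin: "\<forall>k. finite (P k)"
    and ge3: "\<forall>k j. j \<in> P k \<longrightarrow> 3 \<le> j" and k: "3 \<le> k"
  obtains c where "in_X \<omega> c" "wnorm \<omega> c \<le> 1"
    "in_X \<omega> (Aop P c) \<Longrightarrow> Sfun \<omega> P k \<le> (wnorm \<omega> (Aop P c))\<^sup>2"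
proof (cases "P k = {}")
  case True
  have "in_X \<omega> (\<lambda>_. 0)" by (simp add: in_X_def)
  moreover have "wnorm \<omega> (\<lambda>_. 0) \<le> 1" by (simp add: wnorm_def)
  moreover have "Sfun \<omega> P k \<le> (wnorm \<omega> (Aop P (\<lambda>_. 0)))\<^sup>2" using True by (simp add: Sfun_def)
  ultimately show ?thesis using that by blast
next
  case False
  define W where "W = (\<Sum>j\<in>P k. \<omega> j)"
  have Wpos: "W > 0" unfolding W_def using False fin pos by (intro sum_pos) auto
  define c where "c = (\<lambda>j. if j \<in> P k then complex_of_real (\<omega> j / sqrt W) else 0)"
  have c0: "\<forall>n<3. c n = 0" using ge3 by (auto simp: c_def) (meson leD)
  have fsupp: "\<And>n. n \<notin> P k \<Longrightarrow> (cmod (c n))\<^sup>2 / \<omega> n = 0" by (simp add: c_def)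
  have sc: "summable (\<lambda>n. (cmod (c n))\<^sup>2 / \<omega> n)"
    by (rule summable_finite[OF _ fsupp]) (use fin in auto)
  have inX: "in_X \<omega> c" using c0 sc by (simp add: in_X_def)
  have "(\<Sum>n. (cmod (c n))\<^sup>2 / \<omega> n) = (\<Sum>n\<in>P k. (cmod (c n))\<^sup>2 / \<omega> n)"
    by (rule suminf_finite[OF _ fsupp]) (use fin in auto)
  also have "\<dots> = (\<Sum>n\<in>P k. \<omega> n / W)"
  proof (rule sum.cong)
    fix n assume "n \<in> P k"
    then have "(cmod (c n))\<^sup>2 = (\<omega> n)\<^sup>2 / W" using pos Wpos
      by (simp add: c_def norm_divide power_divide abs_of_pos less_imp_le)
    then show "(cmod (c n))\<^sup>2 / \<omega> n = \<omega> n / W" using pos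
      by (simp add: power2_eq_square)
  qed simp
  also have "\<dots> = 1" using Wpos by (simp add: W_def sum_divide_distrib[symmetric])
  finally have wn: "wnorm \<omega> c = 1" by (simp add: wnorm_def)
  have Ack: "Aop P c k = complex_of_real (sqrt W)"
  proof -
    have "Aop P c k = (\<Sum>j\<in>P k. complex_of_real (\<omega> j / sqrt W))"
      using k by (simp add: Aop_def c_def)
    also have "\<dots> = complex_of_real (W / sqrt W)"
      by (simp add: W_def sum_divide_distrib[symmetric])
    also have "W / sqrt W = sqrt W" using Wpos by (simp add: real_div_sqrt)
    finally show ?thesis .
  qed
  have "in_X \<omega> (Aop P c) \<Longrightarrow> Sfun \<omega> P k \<le> (wnorm \<omega> (Aop P c))\<^sup>2"
  proof -
    assume iA: "in_X \<omega> (Aop P c)"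
    have "Sfun \<omega> P k = (cmod (Aop P c k))\<^sup>2 / \<omega> k"
      using Wpos by (simp add: Ack Sfun_def W_def sum_divide_distrib[symmetric])
    also have "\<dots> = (\<Sum>n\<in>{k}. (cmod (Aop P c n))\<^sup>2 / \<omega> n)" by simp
    also have "\<dots> \<le> (\<Sum>n. (cmod (Aop P c n))\<^sup>2 / \<omega> n)"
      using iA pos by (intro sum_le_suminf) (auto simp: in_X_def term_nonneg)
    also have "\<dots> = (wnorm \<omega> (Aop P c))\<^sup>2" using wnorm_sq[OF iA pos] by simp
    finally show ?thesis .
  qed
  then show ?thesis using that inX wn by simp
qed

lemma upper_bound:
  assumes pos: "\<forall>n. \<omega> n > 0" and fin: "\<forall>k. finite (P k)"
    and ge3: "\<forall>k j. j \<in> P k \<longrightarrow> 3 \<le> j"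
    and disj: "\<forall>k k' j. j \<in> P k \<longrightarrow> j \<in> P k' \<longrightarrow> k = k'"
    and M: "\<forall>k\<ge>3. Sfun \<omega> P k \<le> M" "M \<ge> 0"
    and c: "in_X \<omega> c"
  shows "in_X \<omega> (Aop P c) \<and> (wnorm \<omega> (Aop P c))\<^sup>2 \<le> M * (wnorm \<omega> c)\<^sup>2"
proof -
  define f where "f = (\<lambda>n. (cmod (c n))\<^sup>2 / \<omega> n)"
  define g where "g = (\<lambda>n. (cmod (Aop P c n))\<^sup>2 / \<omega> n)"
  have f0: "\<And>n. 0 \<le> f n" unfolding f_def using pos by (simp add: term_nonneg)
  have g0: "\<And>n. 0 \<le> g n" unfolding g_def using pos by (simp add: term_nonneg)
  have sf: "summable f" using c by (simp add: in_X_def f_def)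
  have pt: "g k \<le> M * (\<Sum>j\<in>P k. f j)" for k
  proof (cases "k < 3")
    case True
    then show ?thesis using M f0 by (simp add: g_def Aop_def sum_nonneg)
  next
    case False
    have "cmod (Aop P c k) \<le> (\<Sum>j\<in>P k. cmod (c j))"
      using False by (simp add: Aop_def norm_sum)
    also have "\<dots> = (\<Sum>j\<in>P k. (cmod (c j) / sqrt (\<omega> j)) * sqrt (\<omega> j))"
      using pos by (intro sum.cong) (auto simp: less_imp_le, metis less_irrefl)
    finally have "(cmod (Aop P c k))\<^sup>2 \<le> (\<Sum>j\<in>P k. (cmod (c j) / sqrt (\<omega> j)) * sqrt (\<omega> j))\<^sup>2"
      by (simp add: power_mono)
    also have "\<dots> \<le> (\<Sum>j\<in>P k. (cmod (c j) / sqrt (\<omega> j))\<^sup>2) * (\<Sum>j\<in>P k. (sqrt (\<omega> j))\<^sup>2)"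
      by (rule Cauchy_Schwarz_ineq_sum)
    also have "\<dots> = (\<Sum>j\<in>P k. f j) * (\<Sum>j\<in>P k. \<omega> j)"
      using pos by (simp add: f_def power_divide less_imp_le)
    finally have "g k \<le> (\<Sum>j\<in>P k. f j) * (\<Sum>j\<in>P k. \<omega> j) / \<omega> k"
      unfolding g_def using pos by (simp add: divide_right_mono less_imp_le)
    also have "\<dots> = (\<Sum>j\<in>P k. f j) * Sfun \<omega> P k"
      by (simp add: Sfun_def sum_divide_distrib[symmetric])
    also have "\<dots> \<le> (\<Sum>j\<in>P k. f j) * M"
      using M False f0 by (intro mult_left_mono) (auto simp: sum_nonneg)
    finally show ?thesis by (simp add: mult.commute)
  qed
  have ps: "(\<Sum>k<N. g k) \<le> M * suminf f" for N
  proof -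
    have "(\<Sum>k<N. g k) \<le> (\<Sum>k<N. M * (\<Sum>j\<in>P k. f j))" by (intro sum_mono pt)
    also have "\<dots> = M * (\<Sum>k<N. \<Sum>j\<in>P k. f j)" by (simp add: sum_distrib_left)
    also have "(\<Sum>k<N. \<Sum>j\<in>P k. f j) = (\<Sum>j\<in>(\<Union>k<N. P k). f j)"
      using fin disj by (intro sum.UNION_disjoint[symmetric]) auto
    also have "\<dots> \<le> suminf f"
      using fin f0 sf by (intro sum_le_suminf) auto
    finally show ?thesis using M by (simp add: mult_left_mono)
  qed
  have sg: "summable g"
    by (rule bounded_imp_summable[where B="M * suminf f", OF g0])
       (metis lessThan_Suc_atMost ps)
  have "suminf g \<le> M * suminf f" by (rule suminf_le_const[OF sg ps])
  moreover have "in_X \<omega> (Aop P c)" using sg by (simp add: in_X_def g_def Aop_def)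
  ultimately show ?thesis
    using wnorm_sq[OF c pos] wnorm_sq[of \<omega> "Aop P c", OF _ pos] by (simp add: f_def g_def)
qed


lemma abstract_main:
  assumes pos: "\<forall>n. \<omega> n > 0" and fin: "\<forall>k. finite (P k)"
    and ge3: "\<forall>k j. j \<in> P k \<longrightarrow> 3 \<le> j"
    and disj: "\<forall>k k' j. j \<in> P k \<longrightarrow> j \<in> P k' \<longrightarrow> k = k'"
  shows "bounded_on_X \<omega> (Aop P) \<longleftrightarrow> bdd_above (Sfun \<omega> P ` {3..})"
    and "bdd_above (Sfun \<omega> P ` {3..}) \<Longrightarrow> (opnorm_X \<omega> (Aop P))\<^sup>2 = Sup (Sfun \<omega> P ` {3..})"
proof -
  have S0: "Sfun \<omega> P k \<ge> 0" for k
    using pos by (simp add: Sfun_def sum_nonneg less_imp_le)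
  {
    assume b: "bdd_above (Sfun \<omega> P ` {3..})"
    define M where "M = Sup (Sfun \<omega> P ` {3..})"
    have SM: "\<forall>k\<ge>3. Sfun \<omega> P k \<le> M" unfolding M_def using b by (auto intro: cSUP_upper)
    have M0: "M \<ge> 0" using SM[rule_format, of 3] S0[of 3] by simp
    have ub: "in_X \<omega> (Aop P c) \<and> wnorm \<omega> (Aop P c) \<le> sqrt M * wnorm \<omega> c" if c: "in_X \<omega> c" for c
    proof -
      have u: "in_X \<omega> (Aop P c) \<and> (wnorm \<omega> (Aop P c))\<^sup>2 \<le> M * (wnorm \<omega> c)\<^sup>2"
        by (rule upper_bound[OF pos fin ge3 disj SM M0 c])
      then have "(wnorm \<omega> (Aop P c))\<^sup>2 \<le> (sqrt M * wnorm \<omega> c)\<^sup>2"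
        using M0 by (simp add: power_mult_distrib)
      then have "wnorm \<omega> (Aop P c) \<le> sqrt M * wnorm \<omega> c"
        using wnorm_nonneg[OF c pos] M0 by - (rule power2_le_imp_le, auto)
      then show ?thesis using u by simp
    qed
    have bnd: "bounded_on_X \<omega> (Aop P)" unfolding bounded_on_X_def using ub by blast
    define U where "U = (\<lambda>c. wnorm \<omega> (Aop P c)) ` {c. in_X \<omega> c \<and> wnorm \<omega> c \<le> 1}"
    have z: "in_X \<omega> (\<lambda>_. 0)" by (simp add: in_X_def)
    have Une: "U \<noteq> {}" unfolding U_def using z by (auto simp: wnorm_def)
    have Ub: "\<forall>u\<in>U. u \<le> sqrt M" unfolding U_def
    proof safe
      fix c assume "in_X \<omega> c" "wnorm \<omega> c \<le> 1"
      then show "wnorm \<omega> (Aop P c) \<le> sqrt M"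
        using ub[of c] M0 by (smt (verit) mult_left_le real_sqrt_ge_zero)
    qed
    have Ubdd: "bdd_above U" using Ub by (auto simp: bdd_above_def)
    have U0: "\<forall>u\<in>U. u \<ge> 0" unfolding U_def
    proof safe
      fix c assume "in_X \<omega> c" "wnorm \<omega> c \<le> 1"
      then show "0 \<le> wnorm \<omega> (Aop P c)" using wnorm_nonneg[OF conjunct1[OF ub] pos] by blast
    qed
    have sup_le: "Sup U \<le> sqrt M" using Une Ub by - (rule cSup_least, auto)
    have sup0: "Sup U \<ge> 0" using Une U0 Ubdd by (meson all_not_in_conv cSup_upper order_trans)
    have lower: "Sfun \<omega> P k \<le> (Sup U)\<^sup>2" if k: "k \<ge> 3" for k
    proof -
      obtain c where c: "in_X \<omega> c" "wnorm \<omega> c \<le> 1"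
        "in_X \<omega> (Aop P c) \<Longrightarrow> Sfun \<omega> P k \<le> (wnorm \<omega> (Aop P c))\<^sup>2"
        using test_vector[OF pos fin ge3 k] by metis
      have "wnorm \<omega> (Aop P c) \<in> U" unfolding U_def using c by auto
      then have "wnorm \<omega> (Aop P c) \<le> Sup U" using Ubdd by (rule cSup_upper)
      then have "(wnorm \<omega> (Aop P c))\<^sup>2 \<le> (Sup U)\<^sup>2"
        using wnorm_nonneg[OF _ pos] ub[OF c(1)] by - (rule power_mono, auto)
      then show ?thesis using c(3)[OF conjunct1[OF ub[OF c(1)]]] by linarith
    qed
    have "M \<le> (Sup U)\<^sup>2" unfolding M_def using lower by - (rule cSup_least, auto)
    moreover have "(Sup U)\<^sup>2 \<le> (sqrt M)\<^sup>2" by (rule power_mono[OF sup_le sup0])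
    then have "(Sup U)\<^sup>2 \<le> M" using M0 by simp
    ultimately have "(opnorm_X \<omega> (Aop P))\<^sup>2 = M" by (simp add: opnorm_X_def U_def[symmetric])
    note bnd this
  } note A = this
  show "bdd_above (Sfun \<omega> P ` {3..}) \<Longrightarrow> (opnorm_X \<omega> (Aop P))\<^sup>2 = Sup (Sfun \<omega> P ` {3..})"
    using A by blast
  show "bounded_on_X \<omega> (Aop P) \<longleftrightarrow> bdd_above (Sfun \<omega> P ` {3..})"
  proof
    assume "bounded_on_X \<omega> (Aop P)"
    then obtain C where inX: "\<forall>c. in_X \<omega> c \<longrightarrow> in_X \<omega> (Aop P c)"
      and C: "\<forall>c. in_X \<omega> c \<longrightarrow> wnorm \<omega> (Aop P c) \<le> C * wnorm \<omega> c"
      unfolding bounded_on_X_def by blast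
    have "Sfun \<omega> P k \<le> (max C 0)\<^sup>2" if k: "k \<ge> 3" for k
    proof -
      obtain c where c: "in_X \<omega> c" "wnorm \<omega> c \<le> 1"
        "in_X \<omega> (Aop P c) \<Longrightarrow> Sfun \<omega> P k \<le> (wnorm \<omega> (Aop P c))\<^sup>2"
        using test_vector[OF pos fin ge3 k] by metis
      have w0: "0 \<le> wnorm \<omega> c" using wnorm_nonneg[OF c(1) pos] .
      have "wnorm \<omega> (Aop P c) \<le> C * wnorm \<omega> c" using C c by blast
      also have "\<dots> \<le> max C 0" using w0 c(2)
        by (smt (verit) mult_left_le mult_nonpos_nonneg)
      finally have "(wnorm \<omega> (Aop P c))\<^sup>2 \<le> (max C 0)\<^sup>2"
        using wnorm_nonneg[OF _ pos] inX c by - (rule power_mono, auto)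
      then show ?thesis using c(3) inX c(1) by auto
    qed
    then show "bdd_above (Sfun \<omega> P ` {3..})" by (auto simp: bdd_above_def)
  next
    assume "bdd_above (Sfun \<omega> P ` {3..})"
    then show "bounded_on_X \<omega> (Aop P)" using A by blast
  qed
qed


lemma cong_X:
  assumes "\<And>c. in_X \<omega> c \<Longrightarrow> A c = B c"
  shows "bounded_on_X \<omega> A = bounded_on_X \<omega> B" "opnorm_X \<omega> A = opnorm_X \<omega> B"
  using assms by (auto simp: bounded_on_X_def opnorm_X_def intro!: arg_cong[where f=Sup] image_cong)

lemma bounded_pow:
  assumes pos: "\<forall>n. \<omega> n > 0" and b: "bounded_on_X \<omega> A"
  shows "bounded_on_X \<omega> (A ^^ n)"
proof -
  obtain C where inX: "\<forall>c. in_X \<omega> c \<longrightarrow> in_X \<omega> (A c)"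
    and C: "\<forall>c. in_X \<omega> c \<longrightarrow> wnorm \<omega> (A c) \<le> C * wnorm \<omega> c"
    using b unfolding bounded_on_X_def by blast
  have C': "wnorm \<omega> (A c) \<le> max C 0 * wnorm \<omega> c" if "in_X \<omega> c" for c
    using C that wnorm_nonneg[OF that pos] by (smt (verit) mult_right_mono)
  have "in_X \<omega> ((A^^n) c) \<and> wnorm \<omega> ((A^^n) c) \<le> (max C 0)^n * wnorm \<omega> c" if "in_X \<omega> c" for c
  proof (induction n)
    case 0 then show ?case using that by simp
  next
    case (Suc n)
    then have "wnorm \<omega> ((A^^Suc n) c) \<le> max C 0 * wnorm \<omega> ((A^^n) c)" using C' by simp
    also have "\<dots> \<le> max C 0 * ((max C 0)^n * wnorm \<omega> c)"
      using Suc by (intro mult_left_mono) auto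
    finally show ?case using Suc inX by (simp add: mult.assoc)
  qed
  then show ?thesis unfolding bounded_on_X_def by blast
qed



definition Pn :: "nat \<Rightarrow> nat \<Rightarrow> nat set" where
  "Pn n k = {j. 3 \<le> j \<and> (collatzT ^^ n) j = k}"

lemma T_ge: "j \<le> 2 * collatzT j"
  by (simp add: collatzT_def)

lemma iter_ge: "j \<le> 2 ^ n * (collatzT ^^ n) j"
proof (induction n)
  case 0 then show ?case by simp
next
  case (Suc n)
  have "2 ^ n * (collatzT ^^ n) j \<le> 2 ^ n * (2 * collatzT ((collatzT ^^ n) j))"
    using T_ge by (intro mult_left_mono) auto
  with Suc have "j \<le> 2 ^ n * (2 * collatzT ((collatzT ^^ n) j))" by (rule order_trans)
  then show ?case by (simp add: algebra_simps)
qed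

lemma fin_Pn: "finite (Pn n k)"
proof (rule finite_subset)
  show "Pn n k \<subseteq> {..2 ^ n * k}" unfolding Pn_def using iter_ge by auto
qed simp

lemma T_small: "3 \<le> collatzT i \<Longrightarrow> 3 \<le> i"
proof (rule ccontr)
  assume "3 \<le> collatzT i" "\<not> 3 \<le> i"
  then have "i = 0 \<or> i = 1 \<or> i = 2" by auto
  then show False using \<open>3 \<le> collatzT i\<close> by (auto simp: collatzT_def)
qed

lemma Top_pow:
  assumes c0: "\<forall>n<3. c n = 0"
  shows "(Top ^^ n) c = Aop (Pn n) c"
proof (induction n)
  case 0
  show ?case
  proof
    fix k
    show "(Top ^^ 0) c k = Aop (Pn 0) c k"
    proof (cases "k < 3")
      case True then show ?thesis using c0 by (simp add: Aop_def)
    next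
      case False
      then have "Pn 0 k = {k}" by (auto simp: Pn_def)
      then show ?thesis using False by (simp add: Aop_def)
    qed
  qed
next
  case (Suc n)
  show ?case
  proof
    fix k
    show "(Top ^^ Suc n) c k = Aop (Pn (Suc n)) c k"
    proof (cases "k < 3")
      case True then show ?thesis by (simp add: Aop_def Top_def)
    next
      case False
      define Q where "Q = {i. 3 \<le> i \<and> collatzT i = k}"
      have finQ: "finite Q"
        by (rule finite_subset[of _ "{..2*k}"]) (use T_ge in \<open>auto simp: Q_def\<close>)
      have "(Top ^^ Suc n) c k = Top (Aop (Pn n) c) k" using Suc by simp
      also have "\<dots> = (\<Sum>i\<in>Q. \<Sum>j\<in>Pn n i. c j)"
        using False by (simp add: Top_def Aop_def Q_def)
      also have "\<dots> = (\<Sum>i\<in>Q. \<Sum>j\<in>{x \<in> Pn (Suc n) k. (collatzT ^^ n) x = i}. c j)"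
      proof (rule sum.cong)
        fix i assume "i \<in> Q"
        then have "{x \<in> Pn (Suc n) k. (collatzT ^^ n) x = i} = Pn n i"
          by (auto simp: Pn_def Q_def)
        then show "(\<Sum>j\<in>Pn n i. c j) = (\<Sum>j\<in>{x \<in> Pn (Suc n) k. (collatzT ^^ n) x = i}. c j)"
          by simp
      qed simp
      also have "\<dots> = (\<Sum>j\<in>Pn (Suc n) k. c j)"
      proof (rule sum.group[OF fin_Pn finQ])
        show "(collatzT ^^ n) ` Pn (Suc n) k \<subseteq> Q"
          using False T_small by (auto simp: Pn_def Q_def)
      qed
      also have "\<dots> = Aop (Pn (Suc n)) c k" using False by (simp add: Aop_def)
      finally show ?thesis .
    qed
  qed
qed

lemma T_eq: "collatzT j = k \<longleftrightarrow> j = 2 * k \<or> (odd j \<and> 3 * j + 1 = 2 * k)"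
proof (cases "even j")
  case True
  then obtain b where "j = 2 * b" by (auto elim!: evenE)
  then show ?thesis by (simp add: collatzT_def)
next
  case False
  then obtain b where b: "j = 2 * b + 1" by (auto elim!: oddE)
  then have "collatzT j = 3 * b + 2" by (simp add: collatzT_def)
  then show ?thesis by (simp add: b; presburger)
qed

lemma P1_0: "1 \<le> m \<Longrightarrow> Pn 1 (3*m) = {6*m}"
  by (auto simp: Pn_def T_eq; presburger)

lemma P1_1: "1 \<le> m \<Longrightarrow> Pn 1 (3*m+1) = {6*m+2}"
  by (auto simp: Pn_def T_eq; presburger)

lemma P1_2: "1 \<le> m \<Longrightarrow> Pn 1 (3*m+2) = {6*m+4, 2*m+1}"
  by (auto simp: Pn_def T_eq; presburger)



lemma Pn_props:
  shows "\<forall>k. finite (Pn n k)" "\<forall>k j. j \<in> Pn n k \<longrightarrow> 3 \<le> j"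
    "\<forall>k k' j. j \<in> Pn n k \<longrightarrow> j \<in> Pn n k' \<longrightarrow> k = k'"
  using fin_Pn by (auto simp: Pn_def)

lemma Top_cong: "in_X \<omega> c \<Longrightarrow> (Top ^^ n) c = Aop (Pn n) c"
  by (rule Top_pow) (simp add: in_X_def)

lemma image_split:
  assumes pos: "\<forall>n. \<omega> n > 0"
  shows "Sfun \<omega> (Pn 1) ` {3..} =
     (\<lambda>m. \<omega> (6*m) / \<omega> (3*m)) ` {1..} \<union>
     ((\<lambda>m. \<omega> (6*m+2) / \<omega> (3*m+1)) ` {1..} \<union>
      (\<lambda>m. (\<omega> (6*m+4) + \<omega> (2*m+1)) / \<omega> (3*m+2)) ` {1..})"
proof -
  have e0: "Sfun \<omega> (Pn 1) (3*m) = \<omega> (6*m) / \<omega> (3*m)" if "1 \<le> m" for m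
    using P1_0[OF that] by (simp add: Sfun_def)
  have e1: "Sfun \<omega> (Pn 1) (3*m+1) = \<omega> (6*m+2) / \<omega> (3*m+1)" if "1 \<le> m" for m
    using P1_1[OF that] by (simp add: Sfun_def)
  have e2: "Sfun \<omega> (Pn 1) (3*m+2) = (\<omega> (6*m+4) + \<omega> (2*m+1)) / \<omega> (3*m+2)" if "1 \<le> m" for m
    using P1_2[OF that] by (simp add: Sfun_def add_divide_distrib)
  show ?thesis
  proof (intro equalityI subsetI)
    fix x assume "x \<in> Sfun \<omega> (Pn 1) ` {3..}"
    then obtain k where k: "k \<ge> 3" "x = Sfun \<omega> (Pn 1) k" by auto
    define m where "m = k div 3"
    have m1: "1 \<le> m" using k by (simp add: m_def)
    have "k = 3*m \<or> k = 3*m+1 \<or> k = 3*m+2" unfolding m_def by presburger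
    then show "x \<in> (\<lambda>m. \<omega> (6*m) / \<omega> (3*m)) ` {1..} \<union>
     ((\<lambda>m. \<omega> (6*m+2) / \<omega> (3*m+1)) ` {1..} \<union>
      (\<lambda>m. (\<omega> (6*m+4) + \<omega> (2*m+1)) / \<omega> (3*m+2)) ` {1..})"
      using e0[OF m1] e1[OF m1] e2[OF m1] k m1 by auto
  next
    fix x assume "x \<in> (\<lambda>m. \<omega> (6*m) / \<omega> (3*m)) ` {1..} \<union>
     ((\<lambda>m. \<omega> (6*m+2) / \<omega> (3*m+1)) ` {1..} \<union>
      (\<lambda>m. (\<omega> (6*m+4) + \<omega> (2*m+1)) / \<omega> (3*m+2)) ` {1..})"
    then obtain m where m: "m \<ge> 1" and
      "x = \<omega> (6*m) / \<omega> (3*m) \<or> x = \<omega> (6*m+2) / \<omega> (3*m+1) \<or>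
       x = (\<omega> (6*m+4) + \<omega> (2*m+1)) / \<omega> (3*m+2)" by auto
    then have "x = Sfun \<omega> (Pn 1) (3*m) \<or> x = Sfun \<omega> (Pn 1) (3*m+1) \<or> x = Sfun \<omega> (Pn 1) (3*m+2)"
      using e0 e1 e2 by auto
    moreover have "3*m \<in> {3..}" "3*m+1 \<in> {3..}" "3*m+2 \<in> {3..}" using m by auto
    ultimately show "x \<in> Sfun \<omega> (Pn 1) ` {3..}" by blast
  qed
qed

lemma general:
  fixes \<omega> :: "nat \<Rightarrow> real"
  assumes pos: "\<forall>n. \<omega> n > 0"
  shows "(bounded_on_X \<omega> Top \<longleftrightarrow>
            bdd_above ((\<lambda>m. \<omega> (6*m) / \<omega> (3*m)) ` {1..}) \<and>
            bdd_above ((\<lambda>m. \<omega> (6*m+2) / \<omega> (3*m+1)) ` {1..}) \<and>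
            bdd_above ((\<lambda>m. (\<omega> (6*m+4) + \<omega> (2*m+1)) / \<omega> (3*m+2)) ` {1..}))
       \<and> (bounded_on_X \<omega> Top \<longrightarrow>
            (opnorm_X \<omega> Top)\<^sup>2 =
              max (Sup ((\<lambda>m. \<omega> (6*m) / \<omega> (3*m)) ` {1..}))
                (max (Sup ((\<lambda>m. \<omega> (6*m+2) / \<omega> (3*m+1)) ` {1..}))
                     (Sup ((\<lambda>m. (\<omega> (6*m+4) + \<omega> (2*m+1)) / \<omega> (3*m+2)) ` {1..})))
          \<and> (\<forall>n::nat. (opnorm_X \<omega> (Top ^^ n))\<^sup>2 =
               Sup ((\<lambda>k. \<Sum>j\<in>{j. 3 \<le> j \<and> (collatzT ^^ n) j = k}. \<omega> j / \<omega> k) ` {3..})))"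
proof -
  note props = Pn_props
  have AM: "bounded_on_X \<omega> (Aop (Pn n)) \<longleftrightarrow> bdd_above (Sfun \<omega> (Pn n) ` {3..})"
    "bdd_above (Sfun \<omega> (Pn n) ` {3..}) \<Longrightarrow> (opnorm_X \<omega> (Aop (Pn n)))\<^sup>2 = Sup (Sfun \<omega> (Pn n) ` {3..})"
    for n by (rule abstract_main[OF pos props])+
  have CN: "bounded_on_X \<omega> (Top ^^ n) = bounded_on_X \<omega> (Aop (Pn n))"
    "opnorm_X \<omega> (Top ^^ n) = opnorm_X \<omega> (Aop (Pn n))" for n
    using cong_X[of \<omega> "Top ^^ n" "Aop (Pn n)"] Top_cong by blast+
  have C1: "bounded_on_X \<omega> Top = bounded_on_X \<omega> (Aop (Pn 1))"
    "opnorm_X \<omega> Top = opnorm_X \<omega> (Aop (Pn 1))"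
    using CN[of 1] by simp_all
  define A1 where "A1 = (\<lambda>m. \<omega> (6*m) / \<omega> (3*m)) ` {1..}"
  define A2 where "A2 = (\<lambda>m. \<omega> (6*m+2) / \<omega> (3*m+1)) ` {1..}"
  define A3 where "A3 = (\<lambda>m. (\<omega> (6*m+4) + \<omega> (2*m+1)) / \<omega> (3*m+2)) ` {1..}"
  have split: "Sfun \<omega> (Pn 1) ` {3..} = A1 \<union> (A2 \<union> A3)"
    unfolding A1_def A2_def A3_def by (rule image_split[OF pos])
  have ne: "A1 \<noteq> {}" "A2 \<noteq> {}" "A3 \<noteq> {}" unfolding A1_def A2_def A3_def by auto
  have part1: "bounded_on_X \<omega> Top \<longleftrightarrow> bdd_above A1 \<and> bdd_above A2 \<and> bdd_above A3"
    using C1(1) AM(1)[of 1] split by simp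
  have part2: "(opnorm_X \<omega> Top)\<^sup>2 = max (Sup A1) (max (Sup A2) (Sup A3))"
    if b: "bounded_on_X \<omega> Top"
  proof -
    have bb: "bdd_above A1" "bdd_above A2" "bdd_above A3" using part1 b by auto
    have "(opnorm_X \<omega> Top)\<^sup>2 = Sup (A1 \<union> (A2 \<union> A3))"
      using C1 AM(2)[of 1] split b part1 by simp
    also have "\<dots> = max (Sup A1) (max (Sup A2) (Sup A3))"
      using ne bb by (simp add: cSup_union_distrib sup_max)
    finally show ?thesis .
  qed
  have part3: "(opnorm_X \<omega> (Top ^^ n))\<^sup>2 =
               Sup ((\<lambda>k. \<Sum>j\<in>{j. 3 \<le> j \<and> (collatzT ^^ n) j = k}. \<omega> j / \<omega> k) ` {3..})"
    if b: "bounded_on_X \<omega> Top" for n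
  proof -
    have "bounded_on_X \<omega> (Aop (Pn n))" using bounded_pow[OF pos b, of n] CN by simp
    then have "bdd_above (Sfun \<omega> (Pn n) ` {3..})" using AM by simp
    then have "(opnorm_X \<omega> (Top ^^ n))\<^sup>2 = Sup (Sfun \<omega> (Pn n) ` {3..})" using AM CN by simp
    moreover have "Sfun \<omega> (Pn n) = (\<lambda>k. \<Sum>j\<in>{j. 3 \<le> j \<and> (collatzT ^^ n) j = k}. \<omega> j / \<omega> k)"
      by (simp add: fun_eq_iff Sfun_def Pn_def)
    ultimately show ?thesis by simp
  qed
  show ?thesis using part1 part2 part3 unfolding A1_def A2_def A3_def by blast
qed



lemma om0_pos: "\<forall>n. omega0 n > 0" by (simp add: omega0_def)

lemma om0_ratio: "omega0 a / omega0 b = (real a + 1) / (real b + 1)"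
  by (simp add: omega0_def)

lemma om0_ratio2: "(omega0 a + omega0 b) / omega0 c = (real a + real b + 2) / (real c + 1)"
proof -
  have "omega0 a + omega0 b = (real a + real b + 2) / pi"
    by (simp add: omega0_def add_divide_distrib[symmetric])
  then show ?thesis by (simp add: omega0_def)
qed

lemma om0_facts:
  shows "\<forall>x\<in>(\<lambda>m. omega0 (6*m) / omega0 (3*m)) ` {1..}. x \<le> 2"
    "\<forall>x\<in>(\<lambda>m. omega0 (6*m+2) / omega0 (3*m+1)) ` {1..}. x \<le> 2"
    "\<forall>x\<in>(\<lambda>m. (omega0 (6*m+4) + omega0 (2*m+1)) / omega0 (3*m+2)) ` {1..}. x \<le> 8/3"
    "Sup ((\<lambda>m. (omega0 (6*m+4) + omega0 (2*m+1)) / omega0 (3*m+2)) ` {1..}) = 8/3"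
proof -
  show "\<forall>x\<in>(\<lambda>m. omega0 (6*m) / omega0 (3*m)) ` {1..}. x \<le> 2"
    by (auto simp: om0_ratio field_simps)
  show "\<forall>x\<in>(\<lambda>m. omega0 (6*m+2) / omega0 (3*m+1)) ` {1..}. x \<le> 2"
    by (auto simp: om0_ratio field_simps)
  have F3: "(omega0 (6*m+4) + omega0 (2*m+1)) / omega0 (3*m+2) = 8/3 - 1 / (3 * real m + 3)" for m
    by (simp add: om0_ratio2 field_simps)
  show le: "\<forall>x\<in>(\<lambda>m. (omega0 (6*m+4) + omega0 (2*m+1)) / omega0 (3*m+2)) ` {1..}. x \<le> 8/3"
    unfolding F3 by auto
  show "Sup ((\<lambda>m. (omega0 (6*m+4) + omega0 (2*m+1)) / omega0 (3*m+2)) ` {1..}) = 8/3"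
  proof (rule cSup_eq_non_empty)
    show "(\<lambda>m. (omega0 (6*m+4) + omega0 (2*m+1)) / omega0 (3*m+2)) ` {1..} \<noteq> {}" by auto
    show "\<And>x. x \<in> (\<lambda>m. (omega0 (6*m+4) + omega0 (2*m+1)) / omega0 (3*m+2)) ` {1..} \<Longrightarrow> x \<le> 8/3"
      using le by blast
  next
    fix y assume ub: "\<And>x. x \<in> (\<lambda>m. (omega0 (6*m+4) + omega0 (2*m+1)) / omega0 (3*m+2)) ` {1..} \<Longrightarrow> x \<le> y"
    show "8/3 \<le> y"
    proof (rule ccontr)
      assume "\<not> 8/3 \<le> y"
      then have d: "8/3 - y > 0" by simp
      obtain m :: nat where m: "1 / (8/3 - y) < real m" using reals_Archimedean2 by blast
      have m0: "real m > 0" using m d by (smt (verit) divide_pos_pos)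
      then have m1: "m \<ge> 1" by simp
      have "1 / (3 * real m + 3) < 8/3 - y"
      proof -
        have "1 / (8/3 - y) < 3 * real m + 3" using m m0 by simp
        then show ?thesis using d m0 by (simp add: field_simps)
      qed
      then have "y < (omega0 (6*m+4) + omega0 (2*m+1)) / omega0 (3*m+2)" unfolding F3 by simp
      moreover have "(omega0 (6*m+4) + omega0 (2*m+1)) / omega0 (3*m+2) \<le> y"
        using ub m1 by auto
      ultimately show False by simp
    qed
  qed
qed


theorem proposition2p1:
  fixes \<omega> :: "nat \<Rightarrow> real"
  assumes pos: "\<forall>n. \<omega> n > 0"
  shows "(bounded_on_X \<omega> Top \<longleftrightarrow>
            bdd_above ((\<lambda>m. \<omega> (6*m) / \<omega> (3*m)) ` {1..}) \<and>
            bdd_above ((\<lambda>m. \<omega> (6*m+2) / \<omega> (3*m+1)) ` {1..}) \<and>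
            bdd_above ((\<lambda>m. (\<omega> (6*m+4) + \<omega> (2*m+1)) / \<omega> (3*m+2)) ` {1..}))
       \<and> (bounded_on_X \<omega> Top \<longrightarrow>
            (opnorm_X \<omega> Top)\<^sup>2 =
              max (Sup ((\<lambda>m. \<omega> (6*m) / \<omega> (3*m)) ` {1..}))
                (max (Sup ((\<lambda>m. \<omega> (6*m+2) / \<omega> (3*m+1)) ` {1..}))
                     (Sup ((\<lambda>m. (\<omega> (6*m+4) + \<omega> (2*m+1)) / \<omega> (3*m+2)) ` {1..})))
          \<and> (\<forall>n::nat. (opnorm_X \<omega> (Top ^^ n))\<^sup>2 =
               Sup ((\<lambda>k. \<Sum>j\<in>{j. 3 \<le> j \<and> (collatzT ^^ n) j = k}. \<omega> j / \<omega> k) ` {3..})))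
       \<and> bounded_on_X omega0 Top \<and> (opnorm_X omega0 Top)\<^sup>2 = 8 / 3"
  proof -
  note G = general[OF pos]
  note G0 = general[OF om0_pos]
  note FF = om0_facts
  have bd: "bdd_above ((\<lambda>m. omega0 (6*m) / omega0 (3*m)) ` {1..})"
     "bdd_above ((\<lambda>m. omega0 (6*m+2) / omega0 (3*m+1)) ` {1..})"
     "bdd_above ((\<lambda>m. (omega0 (6*m+4) + omega0 (2*m+1)) / omega0 (3*m+2)) ` {1..})"
    using FF(1,2,3) unfolding bdd_above_def by blast+
  have b0: "bounded_on_X omega0 Top" using G0 bd by blast
  have s1: "Sup ((\<lambda>m. omega0 (6*m) / omega0 (3*m)) ` {1..}) \<le> 2"
    using FF(1) by (intro cSup_least) auto
  have s2: "Sup ((\<lambda>m. omega0 (6*m+2) / omega0 (3*m+1)) ` {1..}) \<le> 2"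
    using FF(2) by (intro cSup_least) auto
  have h: "(opnorm_X omega0 Top)\<^sup>2 = 8/3"
    using G0 b0 s1 s2 FF(4) by simp
  show ?thesis by (rule conjI[OF conjunct1[OF G] conjI[OF conjunct2[OF G] conjI[OF b0 h]]])
qed

end
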